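(* Let $K=\mathbb{Q}(\sqrt{-D})$ with $D$ a square-free positive integer, let $\mathcal{O}$ be its ring of integers, let $M_1$ be a positive integer, and let $c\in K$. Set $\Delta_c=\{M_1xc^{2^n}: x\in\mathcal{O},\ n\in\mathbb{N}\}$. If $c\notin\mathcal{O}$, then $\Delta_c$ does not have the B-C property.
   Context: A set $A\subset\mathbb{C}$ has the B-C property if there is $K_A$ such that for all $m,n\in\mathbb{Z}$ the square $\{z: m\le\mathrm{Re}\,z\le m+1,\ n\le\mathrm{Im}\,z\le n+1\}$ contains fewer than $K_A$ elements of $A$. *)

theory Defs
  imports "HOL-Analysis.Analysis" "HOL-Computational_Algebra.Computational_Algebra"
begin

definition quad_field :: "nat \<Rightarrow> complex set" where
  "quad_field D = {of_real a + of_real b * \<i> * of_real (sqrt (real D)) | a b. a \<in> \<rat> \<and> b \<in> \<rat>}"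

definition ring_of_integers :: "nat \<Rightarrow> complex set" where
  "ring_of_integers D = {z \<in> quad_field D. algebraic_int z}"

definition unit_square :: "int \<Rightarrow> int \<Rightarrow> complex set" where
  "unit_square m n = {z. of_int m \<le> Re z \<and> Re z \<le> of_int m + 1 \<and> of_int n \<le> Im z \<and> Im z \<le> of_int n + 1}"

definition BC_property :: "complex set \<Rightarrow> bool" where
  "BC_property A \<longleftrightarrow> (\<exists>K::nat. \<forall>m n. finite (A \<inter> unit_square m n) \<and> card (A \<inter> unit_square m n) < K)"

definition Delta_c :: "nat \<Rightarrow> nat \<Rightarrow> complex \<Rightarrow> complex set" where
  "Delta_c D M1 c = {of_nat M1 * x * c ^ (2 ^ n) | x n. x \<in> ring_of_integers D}"

end

theory Submission
  imports Defs
begin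

definition RR :: "nat \<Rightarrow> complex set" where
  "RR D = {of_int a + of_int b * \<i> * of_real (sqrt (real D)) | a b. True}"

lemma alg_int_quad:
  fixes z :: complex
  assumes "z + cnj z \<in> \<int>" "z * cnj z \<in> \<int>"
  shows "algebraic_int z"
proof -
  from assms obtain t n where t: "z + cnj z = of_int t" and n: "z * cnj z = of_int n"
    by (auto elim!: Ints_cases)
  show ?thesis
  proof (rule algebraic_int.intros[of "[:of_int n, - of_int t, 1:]"])
    show "lead_coeff [:of_int n, - of_int t, 1:] = (1::complex)" by simp
    show "\<forall>i. coeff [:of_int n, - of_int t, 1:] i \<in> (\<int>::complex set)"
      by (auto simp: coeff_pCons split: nat.splits)
    have "poly [:of_int n, - of_int t, 1:] z = z * cnj z - (z + cnj z) * z + z * z"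
      by (simp add: t n algebra_simps)
    also have "\<dots> = 0" by (simp add: algebra_simps)
    finally show "poly [:of_int n, - of_int t, 1:] z = 0" .
  qed
qed

lemma sq_sqrt_c: "(complex_of_real (sqrt (real D)))^2 = of_nat D"
  by (metis of_nat_0_le_iff of_real_of_nat_eq of_real_power real_sqrt_pow2)

lemma RR_I: "of_int a + of_int b * \<i> * of_real (sqrt (real D)) \<in> RR D"
  unfolding RR_def by blast

lemma RR_E: assumes "z \<in> RR D"
  obtains a b where "z = of_int a + of_int b * \<i> * of_real (sqrt (real D))"
  using assms unfolding RR_def by blast

lemma RR_add: "x \<in> RR D \<Longrightarrow> y \<in> RR D \<Longrightarrow> x + y \<in> RR D"
proof -
  assume "x \<in> RR D" "y \<in> RR D"
  then obtain a b a' b' where "x = of_int a + of_int b * \<i> * of_real (sqrt (real D))"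
    "y = of_int a' + of_int b' * \<i> * of_real (sqrt (real D))" by (metis RR_E)
  hence "x + y = of_int (a+a') + of_int (b+b') * \<i> * of_real (sqrt (real D))"
    by (simp add: algebra_simps)
  thus ?thesis by (metis RR_I)
qed

lemma RR_minus: "x \<in> RR D \<Longrightarrow> - x \<in> RR D"
proof -
  assume "x \<in> RR D"
  then obtain a b where "x = of_int a + of_int b * \<i> * of_real (sqrt (real D))" by (metis RR_E)
  hence "- x = of_int (-a) + of_int (-b) * \<i> * of_real (sqrt (real D))"
    by (simp add: algebra_simps)
  thus ?thesis by (metis RR_I)
qed

lemma RR_mult: "x \<in> RR D \<Longrightarrow> y \<in> RR D \<Longrightarrow> x * y \<in> RR D"
proof -
  assume "x \<in> RR D" "y \<in> RR D"
  then obtain a b a' b' where x: "x = of_int a + of_int b * \<i> * of_real (sqrt (real D))"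
    and y: "y = of_int a' + of_int b' * \<i> * of_real (sqrt (real D))" by (metis RR_E)
  have "x * y = of_int (a*a' - int D*b*b') + of_int (a*b'+a'*b) * \<i> * of_real (sqrt (real D))"
    unfolding x y using sq_sqrt_c[of D]
    by (simp add: algebra_simps power2_eq_square)
  thus ?thesis by (metis RR_I)
qed

lemma RR_of_int: "of_int k \<in> RR D"
  using RR_I[of k 0 D] by simp

lemma RR_cnj: "x \<in> RR D \<Longrightarrow> cnj x \<in> RR D"
proof -
  assume "x \<in> RR D"
  then obtain a b where "x = of_int a + of_int b * \<i> * of_real (sqrt (real D))" by (metis RR_E)
  hence "cnj x = of_int a + of_int (-b) * \<i> * of_real (sqrt (real D))"
    by (simp)
  thus ?thesis by (metis RR_I)
qed

lemma RR_power: "x \<in> RR D \<Longrightarrow> x ^ n \<in> RR D"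
  by (induction n) (auto intro: RR_mult simp: RR_of_int[of 1, simplified])

lemma RR_norm_int: "x \<in> RR D \<Longrightarrow> x * cnj x \<in> \<int>"
proof -
  assume "x \<in> RR D"
  then obtain a b where x: "x = of_int a + of_int b * \<i> * of_real (sqrt (real D))" by (metis RR_E)
  have "x * cnj x = of_int (a*a + int D*b*b)"
    unfolding x using sq_sqrt_c[of D]
    by (simp add: algebra_simps power2_eq_square)
  thus ?thesis by simp
qed

lemma RR_trace_int: "x \<in> RR D \<Longrightarrow> x + cnj x \<in> \<int>"
proof -
  assume "x \<in> RR D"
  then obtain a b where x: "x = of_int a + of_int b * \<i> * of_real (sqrt (real D))" by (metis RR_E)
  have "x + cnj x = of_int (2*a)"
    unfolding x by (simp add: algebra_simps)
  thus ?thesis by simp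
qed

lemma RR_sub_O: "x \<in> RR D \<Longrightarrow> x \<in> ring_of_integers D"
proof -
  assume xR: "x \<in> RR D"
  then obtain a b where x: "x = of_int a + of_int b * \<i> * of_real (sqrt (real D))" by (metis RR_E)
  have "x \<in> quad_field D" unfolding quad_field_def x
    by (rule CollectI, rule exI[of _ "of_int a"], rule exI[of _ "of_int b"]) simp
  moreover have "algebraic_int x"
    by (rule alg_int_quad[OF RR_trace_int[OF xR] RR_norm_int[OF xR]])
  ultimately show ?thesis unfolding ring_of_integers_def by blast
qed

lemma den_growth:
  fixes v h :: int
  assumes v: "v \<ge> 2" and h: "h \<noteq> 0"
    and H: "\<And>m. \<exists>u. coprime u v \<and> v^(2^m) dvd h*u"
  shows False
proof -
  define m where "m = nat \<bar>h\<bar>"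
  obtain u where u: "coprime u v" "v^(2^m) dvd h*u" using H by blast
  have "coprime (v^(2^m)) u" using u(1) by (simp add: coprime_commute)
  hence "v^(2^m) dvd h" using u(2) coprime_dvd_mult_left_iff by blast
  hence le: "\<bar>v^(2^m)\<bar> \<le> \<bar>h\<bar>" using h dvd_imp_le_int by blast
  have "(2::int)^(2^m) \<le> v^(2^m)" using v by (intro power_mono) auto
  moreover have "int m < 2^m" by (metis of_nat_less_two_power)
  moreover have "(2::int)^m \<le> 2^(2^m)"
    by (intro power_increasing) (auto simp: less_imp_le[OF less_exp])
  ultimately have "\<bar>h\<bar> < v^(2^m)" unfolding m_def by linarith
  hence "\<bar>h\<bar> < \<bar>v^(2^m)\<bar>" by linarith
  with le show False by simp
qed

lemma rat_den_growth:
  fixes x :: real and h :: int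
  assumes "x \<in> \<rat>" "x \<notin> \<int>" "h \<noteq> 0"
    and step: "\<And>u v m. coprime u v \<Longrightarrow> v > 0 \<Longrightarrow> x = of_int u / of_int v \<Longrightarrow>
        \<exists>u'. coprime u' v \<and> of_int h * of_int u' / of_int v^(2^m) \<in> (\<int>::real set)"
  shows False
proof -
  from assms(1) obtain u v where uv: "v > 0" "coprime u v" "x = of_int u / of_int v"
    by (auto elim: Rats_cases')
  have "v \<noteq> 1" using uv assms(2) by auto
  hence v2: "v \<ge> 2" using uv by auto
  show False
  proof (rule den_growth[OF v2 assms(3)])
    fix m
    obtain u' where u': "coprime u' v" "of_int h * of_int u' / of_int v^(2^m) \<in> (\<int>::real set)"
      using step[OF uv(2,1,3)] by blast
    then obtain w where w: "of_int h * of_int u' / of_int v^(2^m) = (of_int w :: real)"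
      by (auto elim: Ints_cases)
    have "(of_int v :: real)^(2^m) \<noteq> 0" using uv by simp
    hence "of_int (h*u') = (of_int (w * v^(2^m)) :: real)" using w by (simp add: field_simps)
    hence "h*u' = w * v^(2^m)" by linarith
    thus "\<exists>u. coprime u v \<and> v^(2^m) dvd h*u" using u' by (metis dvd_triv_right)
  qed
qed

lemma coprime_add_multiple:
  fixes x y z :: int
  assumes "coprime x z" shows "coprime (x + y * z) z"
proof -
  have "gcd z (y * z + x) = gcd z x" by (rule gcd_add_mult)
  thus ?thesis using assms
    by (metis coprime_iff_gcd_eq_1 gcd.commute add.commute)
qed

lemma quad_field_E:
  assumes "c \<in> quad_field D"
  obtains a b :: real where "a \<in> \<rat>" "b \<in> \<rat>"
    "c = of_real a + of_real b * \<i> * of_real (sqrt (real D))"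
  using assms unfolding quad_field_def by blast

lemma nonint:
  fixes c :: complex and h :: int
  assumes c: "c \<in> quad_field D" and nc: "c \<notin> ring_of_integers D" and h: "h \<noteq> 0"
    and all: "\<And>m. of_int h * c^(2^m) \<in> RR D"
  shows False
proof -
  obtain a b :: real where ab: "a \<in> \<rat>" "b \<in> \<rat>"
    and ceq: "c = of_real a + of_real b * \<i> * of_real (sqrt (real D))"
    using c by (rule quad_field_E)
  define n where "n = a^2 + real D * b^2"
  have nQ: "n \<in> \<rat>" unfolding n_def using ab by simp
  have cn: "c * cnj c = of_real n"
    unfolding ceq n_def using sq_sqrt_c[of D]
    by (simp add: algebra_simps power2_eq_square)
  have ct: "c + cnj c = of_real (2*a)"
    unfolding ceq by simp
  have normI: "of_int h ^ 2 * n ^ (2^m) \<in> \<int>" for m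
  proof -
    have "of_int h * c^(2^m) * cnj (of_int h * c^(2^m)) \<in> \<int>"
      by (rule RR_norm_int[OF all])
    also have "of_int h * c^(2^m) * cnj (of_int h * c^(2^m)) = of_int h ^ 2 * (c * cnj c)^(2^m)"
      by (simp add: power_mult_distrib power2_eq_square algebra_simps)
    also have "\<dots> = of_real (of_int h ^ 2 * n ^ (2^m))" by (simp add: cn)
    finally have "complex_of_real (of_int h ^ 2 * n ^ (2^m)) \<in> \<int>" .
    thus ?thesis by (simp only: of_real_in_Ints_iff)
  qed
  have traceI: "of_int h * (c^(2^m) + cnj c ^(2^m)) \<in> \<int>" for m
  proof -
    have "of_int h * c^(2^m) + cnj (of_int h * c^(2^m)) \<in> \<int>"
      by (rule RR_trace_int[OF all])
    thus ?thesis by (simp add: algebra_simps)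
  qed
  have nZ: "n \<in> \<int>"
  proof (rule ccontr)
    assume nn: "n \<notin> \<int>"
    show False
    proof (rule rat_den_growth[OF nQ nn, of "h^2"])
      show "h^2 \<noteq> 0" using h by simp
      fix u v m assume uv: "coprime u (v::int)" "v > 0" "n = of_int u / of_int v"
      show "\<exists>u'. coprime u' v \<and> of_int (h^2) * of_int u' / of_int v^(2^m) \<in> (\<int>::real set)"
      proof (intro exI conjI)
        show "coprime (u^(2^m)) v" using uv by simp
        have "of_int (h^2) * of_int (u^(2^m)) / of_int v^(2^m) = of_int h ^ 2 * n ^ (2^m)"
          using uv by (simp add: power_divide)
        thus "of_int (h^2) * of_int (u^(2^m)) / of_int v^(2^m) \<in> (\<int>::real set)"
          using normI by simp
      qed
    qed
  qed
  then obtain N where N: "n = of_int N" by (auto elim: Ints_cases)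
  have tZ: "2*a \<in> \<int>"
  proof (rule ccontr)
    assume nn: "2*a \<notin> \<int>"
    show False
    proof (rule rat_den_growth[OF _ nn h])
      show "2*a \<in> \<rat>" using ab by simp
      fix u v m assume uv: "coprime u (v::int)" "v > 0" "2*a = of_int u / of_int v"
      have vnz: "(of_int v :: real) \<noteq> 0" using uv by simp
      have "\<exists>u'. coprime u' v \<and> c^(2^k) + cnj c ^(2^k) = of_real (of_int u' / of_int v^(2^k))" for k
      proof (induction k)
        case 0 show ?case using uv ct by (intro exI[of _ u]) simp
      next
        case (Suc k)
        then obtain u' where u': "coprime u' v"
          "c^(2^k) + cnj c ^(2^k) = of_real (of_int u' / of_int v^(2^k))" by blast
        define u'' where "u'' = u'^2 + (- 2 * N^(2^k) * v^(2^(Suc k) - 1)) * v"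
        have cop: "coprime u'' v" unfolding u''_def
          by (rule coprime_add_multiple) (use u' in simp)
        have pw: "(2::nat)^(Suc k) = 2^k + 2^k" by simp
        have pw2: "(2::nat)^(Suc k) - 1 + 1 = 2^(Suc k)" by simp
        have "c^(2^(Suc k)) + cnj c ^(2^(Suc k)) = (c^(2^k) + cnj c ^(2^k))^2 - 2 * (c * cnj c)^(2^k)"
          by (simp only: pw power_add) (simp add: power2_eq_square algebra_simps power_mult_distrib)
        also have "\<dots> = of_real ((of_int u' / of_int v^(2^k))^2 - 2 * of_int N ^ (2^k))"
          using u'(2) cn N by simp
        also have "(of_int u' / of_int v^(2^k))^2 - 2 * of_int N ^ (2^k) = 
             (of_int u'' / of_int v^(2^(Suc k)) :: real)"
        proof -
          have e: "(of_int v :: real)^(2^(Suc k) - 1) * of_int v = of_int v ^ (2^(Suc k))"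
            by (metis pw2 power_Suc2 Suc_eq_plus1)
          have e2: "(of_int v::real)^(2^(Suc k)) = (of_int v ^(2^k))^2"
            by (simp only: pw power_add power2_eq_square)
          have ru: "real_of_int u'' = of_int u' ^2 - 2 * of_int N^(2^k) * ((of_int v)^(2^(Suc k) - 1) * of_int v)"
            unfolding u''_def by (simp add: algebra_simps)
          have V: "(of_int v::real)^(2^k) \<noteq> 0" using vnz by simp
          show ?thesis unfolding ru e e2 using V
            by (simp add: field_simps)
        qed
        finally show ?case using cop by blast
      qed
      then obtain u' where u': "coprime u' v"
          "c^(2^m) + cnj c ^(2^m) = of_real (of_int u' / of_int v^(2^m))" by blast
      show "\<exists>u'. coprime u' v \<and> of_int h * of_int u' / of_int v^(2^m) \<in> (\<int>::real set)"
      proof (intro exI conjI)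
        show "coprime u' v" by fact
        have "complex_of_real (of_int h * of_int u' / of_int v^(2^m)) = of_int h * (c^(2^m) + cnj c ^(2^m))"
          using u'(2) by simp
        thus "of_int h * of_int u' / of_int v^(2^m) \<in> (\<int>::real set)"
          using traceI[of m] by (metis of_real_in_Ints_iff)
      qed
    qed
  qed
  have "algebraic_int c"
  proof (rule alg_int_quad)
    show "c + cnj c \<in> \<int>" unfolding ct using tZ by (simp only: of_real_in_Ints_iff)
    show "c * cnj c \<in> \<int>" unfolding cn using nZ by (simp only: of_real_in_Ints_iff)
  qed
  with c nc show False unfolding ring_of_integers_def by blast
qed

lemma floor_close:
  fixes X1 X2 :: real and L :: int
  assumes "\<lfloor>X1\<rfloor> mod L = \<lfloor>X2\<rfloor> mod L"
  shows "\<exists>a::int. \<bar>X1 - X2 - of_int L * of_int a\<bar> < 1"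
proof -
  have "L dvd \<lfloor>X1\<rfloor> - \<lfloor>X2\<rfloor>" using assms by (simp add: mod_eq_dvd_iff)
  then obtain a where a: "\<lfloor>X1\<rfloor> - \<lfloor>X2\<rfloor> = L * a" by (auto elim: dvdE)
  hence "of_int \<lfloor>X1\<rfloor> - of_int \<lfloor>X2\<rfloor> = (of_int L * of_int a :: real)"
    by (metis of_int_diff of_int_mult)
  moreover have "of_int \<lfloor>X1\<rfloor> \<le> X1" "X1 < of_int \<lfloor>X1\<rfloor> + 1"
    "of_int \<lfloor>X2\<rfloor> \<le> X2" "X2 < of_int \<lfloor>X2\<rfloor> + 1" by linarith+
  ultimately show ?thesis by (intro exI[of _ a]) linarith
qed

lemma floor_close_scaled:
  fixes u1 u2 \<sigma> :: real and L :: nat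
  assumes "\<sigma> > 0" "L > 0" "\<lfloor>L*u1/\<sigma>\<rfloor> mod int L = \<lfloor>L*u2/\<sigma>\<rfloor> mod int L"
  shows "\<exists>a::int. \<bar>u1 - u2 - \<sigma> * of_int a\<bar> < \<sigma> / L"
proof -
  obtain a :: int where a: "\<bar>L*u1/\<sigma> - L*u2/\<sigma> - of_int (int L) * of_int a\<bar> < 1"
    using floor_close[OF assms(3)] by blast
  have "L*u1/\<sigma> - L*u2/\<sigma> - of_int (int L) * of_int a = (L/\<sigma>) * (u1 - u2 - \<sigma> * of_int a)"
    using assms(1) by (simp add: field_simps)
  hence "(L/\<sigma>) * \<bar>u1 - u2 - \<sigma> * of_int a\<bar> < 1" using a assms(1,2)
    by (simp add: abs_mult)
  hence "\<bar>u1 - u2 - \<sigma> * of_int a\<bar> < \<sigma> / L" using assms(1,2)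
    by (simp add: field_simps)
  thus ?thesis by blast
qed

lemma small_elem:
  fixes c :: complex and s :: int and \<delta> :: real
  assumes c: "c \<in> quad_field D" and nc: "c \<notin> ring_of_integers D" and D: "D > 0"
    and M: "M1 > 0" and s: "s > 0" and \<delta>: "\<delta> > 0"
  shows "\<exists>m x y. x \<in> RR D \<and> y \<in> RR D \<and> of_nat M1 * c^(2^m) * x + of_int s * y \<noteq> 0 \<and>
           cmod (of_nat M1 * c^(2^m) * x + of_int s * y) < \<delta>"
proof -
  define sq where "sq = sqrt (real D)"
  have sq: "sq > 0" using D by (simp add: sq_def)
  obtain L :: nat where L: "s * (1 + sq) / \<delta> < L" using reals_Archimedean2 by blast
  have pos: "s * (1 + sq) / \<delta> > 0" using s sq \<delta> by simp
  hence L0: "L > 0" using L by linarith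
  have "s * (1 + sq) < L * \<delta>" using L \<delta> by (simp add: field_simps)
  hence L\<delta>: "real_of_int s/real L + real_of_int s * sq/real L < \<delta>" using L0 by (simp add: field_simps)
  define h where "h = int (fact (L*L)) * int M1"
  have h0: "h \<noteq> 0" unfolding h_def using M by simp
  obtain m where m: "of_int h * c^(2^m) \<notin> RR D"
    using nonint[OF c nc h0] by blast
  define w where "w = (\<lambda>k::nat. of_nat M1 * c^(2^m) * of_nat k :: complex)"
  define f where "f = (\<lambda>k. (\<lfloor>real L * Re (w k) / real_of_int s\<rfloor> mod int L, \<lfloor>real L * Im (w k) / (real_of_int s * sq)\<rfloor> mod int L))"
  have fB: "f ` {0..L*L} \<subseteq> {0..<int L} \<times> {0..<int L}"
    unfolding f_def using L0 by auto
  have "\<not> inj_on f {0..L*L}"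
  proof
    assume "inj_on f {0..L*L}"
    hence "card {0..L*L} \<le> card ({0..<int L} \<times> {0..<int L})"
      using card_inj_on_le fB by blast
    thus False by (simp add: card_cartesian_product)
  qed
  then obtain k1 k2 where k: "k1 \<in> {0..L*L}" "k2 \<in> {0..L*L}" "k1 \<noteq> k2" "f k1 = f k2"
    unfolding inj_on_def by blast
  obtain a :: int where a: "\<bar>Re (w k1) - Re (w k2) - real_of_int s * of_int a\<bar> < real_of_int s / real L"
    using floor_close_scaled[of "real_of_int s" L "Re (w k1)" "Re (w k2)"] s L0 k(4)
    unfolding f_def by auto
  have ssq: "real_of_int s * sq > 0" using s sq by simp
  obtain b :: int where b: "\<bar>Im (w k1) - Im (w k2) - (real_of_int s * sq) * of_int b\<bar> < (real_of_int s * sq) / real L"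
    using floor_close_scaled[OF ssq L0, of "Im (w k1)" "Im (w k2)"] k(4)
    unfolding f_def by auto
  define y where "y = - (of_int a + of_int b * \<i> * complex_of_real sq)"
  define x where "x = (of_int (int k1 - int k2) :: complex)"
  define g where "g = of_nat M1 * c^(2^m) * x + of_int s * y"
  have g_eq: "g = w k1 - w k2 - of_int s * (of_int a + of_int b * \<i> * complex_of_real sq)"
    unfolding g_def w_def x_def y_def by (simp add: algebra_simps)
  have reg: "Re g = Re (w k1) - Re (w k2) - real_of_int s * of_int a"
    unfolding g_eq by simp
  have img: "Im g = Im (w k1) - Im (w k2) - (real_of_int s * sq) * of_int b"
    unfolding g_eq by simp
  have "cmod g \<le> \<bar>Re g\<bar> + \<bar>Im g\<bar>" by (rule cmod_le)
  also have "\<dots> < real_of_int s/real L + real_of_int s * sq/real L" unfolding reg img using a b by simp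
  also have "\<dots> < \<delta>" by (rule L\<delta>)
  finally have gsmall: "cmod g < \<delta>" .
  have xR: "x \<in> RR D" unfolding x_def by (rule RR_of_int)
  have yR: "y \<in> RR D" unfolding y_def sq_def by (intro RR_minus RR_I)
  have gnz: "g \<noteq> 0"
  proof
    assume g0: "g = 0"
    define k where "k = int k1 - int k2"
    have k0: "k \<noteq> 0" using k(3) unfolding k_def by simp
    have kle: "nat \<bar>k\<bar> \<le> L*L" using k(1,2) unfolding k_def by auto
    have "nat \<bar>k\<bar> dvd (fact (L*L) :: nat)" using k0 kle by (intro dvd_fact) auto
    then obtain q :: nat where q: "(fact (L*L) :: nat) = nat \<bar>k\<bar> * q" unfolding dvd_def by blast
    have hx: "of_nat M1 * c^(2^m) * x = of_int s * (of_int a + of_int b * \<i> * complex_of_real sq)"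
      using g0 unfolding g_def y_def by (simp add: algebra_simps)
    have "of_int h * c^(2^m) = of_int (int q * sgn k) * (of_nat M1 * c^(2^m) * x)"
    proof -
      have f1: "int (fact (L*L)) = \<bar>k\<bar> * int q"
        using q by (metis of_nat_mult int_nat_eq abs_ge_zero nat_int of_nat_fact)
      have "h = int q * sgn k * k * int M1"
        unfolding h_def f1 abs_sgn by (simp add: mult_ac)
      hence hk: "of_int h = (of_int (int q * sgn k) * of_nat M1 * x :: complex)"
        unfolding x_def k_def by simp
      show ?thesis by (simp only: hk mult_ac)
    qed
    also have "\<dots> = of_int (int q * sgn k * s) * (of_int a + of_int b * \<i> * complex_of_real (sqrt (real D)))"
      unfolding hx sq_def by (simp add: algebra_simps)
    also have "\<dots> \<in> RR D" by (intro RR_mult RR_of_int RR_I)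
    finally show False using m by simp
  qed
  show ?thesis using xR yR gnz gsmall unfolding g_def by blast
qed

lemma density:
  fixes g t :: complex
  assumes g: "g = of_nat M1 * c^(2^m) * x0 + of_int s * y0" "x0 \<in> RR D" "y0 \<in> RR D"
    and gnz: "g \<noteq> 0" and D: "D > 0"
  shows "\<exists>x y. x \<in> RR D \<and> y \<in> RR D \<and>
     cmod (of_nat M1 * c^(2^m) * x + of_int s * y - t) \<le> cmod g * (1 + sqrt (real D)) / 2"
proof -
  define sq where "sq = sqrt (real D)"
  have sq: "sq > 0" using D by (simp add: sq_def)
  define \<tau> where "\<tau> = t / g"
  define \<rho> where "\<rho> = of_int (round (Re \<tau>)) + of_int (round (Im \<tau> / sq)) * \<i> * complex_of_real sq"
  have \<rho>R: "\<rho> \<in> RR D" unfolding \<rho>_def sq_def by (rule RR_I)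
  have im: "\<bar>Im (\<tau> - \<rho>)\<bar> \<le> sq / 2"
  proof -
    have "Im (\<tau> - \<rho>) = sq * (Im \<tau> / sq - of_int (round (Im \<tau> / sq)))"
      unfolding \<rho>_def using sq by (simp add: field_simps)
    hence "\<bar>Im (\<tau> - \<rho>)\<bar> = sq * \<bar>of_int (round (Im \<tau> / sq)) - Im \<tau> / sq\<bar>"
      using sq by (simp add: abs_mult abs_minus_commute)
    also have "\<dots> \<le> sq * (1/2)"
      using of_int_round_abs_le[of "Im \<tau> / sq"] sq by (intro mult_left_mono) auto
    finally show ?thesis by simp
  qed
  have re: "\<bar>Re (\<tau> - \<rho>)\<bar> \<le> 1 / 2"
    unfolding \<rho>_def using of_int_round_abs_le[of "Re \<tau>"] by (simp add: abs_minus_commute)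
  have "cmod (\<tau> - \<rho>) \<le> \<bar>Re (\<tau> - \<rho>)\<bar> + \<bar>Im (\<tau> - \<rho>)\<bar>" by (rule cmod_le)
  also have "\<dots> \<le> (1 + sq) / 2" using re im by simp
  finally have tr: "cmod (\<tau> - \<rho>) \<le> (1 + sq) / 2" .
  have eq: "of_nat M1 * c^(2^m) * (x0 * \<rho>) + of_int s * (y0 * \<rho>) - t = g * (\<rho> - \<tau>)"
    unfolding g(1) \<tau>_def using gnz g(1) by (simp add: field_simps)
  have "cmod (g * (\<rho> - \<tau>)) = cmod g * cmod (\<tau> - \<rho>)"
    by (simp add: norm_mult norm_minus_commute)
  also have "\<dots> \<le> cmod g * ((1 + sq) / 2)" using tr by (intro mult_left_mono) auto
  finally have "cmod (of_nat M1 * c^(2^m) * (x0 * \<rho>) + of_int s * (y0 * \<rho>) - t)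
     \<le> cmod g * (1 + sqrt (real D)) / 2" unfolding eq sq_def by simp
  thus ?thesis using RR_mult[OF g(2) \<rho>R] RR_mult[OF g(3) \<rho>R] by blast
qed

lemma rat_denom: "(x::real) \<in> \<rat> \<Longrightarrow> \<exists>q::int. q > 0 \<and> of_int q * x \<in> \<int>"
proof -
  assume "x \<in> \<rat>"
  then obtain a b where ab: "b > 0" "x = of_int a / of_int b" by (auto elim: Rats_cases')
  hence "of_int b * x = of_int a" by simp
  thus ?thesis using ab by (intro exI[of _ b]) simp
qed

lemma qc_in_RR:
  assumes "c \<in> quad_field D"
  shows "\<exists>q::int. q > 0 \<and> of_int q * c \<in> RR D"
proof -
  obtain a b :: real where ab: "a \<in> \<rat>" "b \<in> \<rat>"
    and ceq: "c = of_real a + of_real b * \<i> * of_real (sqrt (real D))"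
    using assms by (rule quad_field_E)
  obtain q1 where q1: "q1 > 0" "of_int q1 * a \<in> \<int>" using rat_denom[OF ab(1)] by blast
  obtain q2 where q2: "q2 > 0" "of_int q2 * b \<in> \<int>" using rat_denom[OF ab(2)] by blast
  obtain A where A: "of_int q1 * a = of_int A" using q1(2) by (auto elim: Ints_cases)
  obtain B where B: "of_int q2 * b = of_int B" using q2(2) by (auto elim: Ints_cases)
  have "of_int (q1*q2) * c = of_int (A*q2) + of_int (B*q1) * \<i> * of_real (sqrt (real D))"
  proof -
    have "of_int (q1*q2) * c = of_real (of_int q1 * a) * of_int q2 + of_real (of_int q2 * b) * of_int q1 * \<i> * of_real (sqrt (real D))"
      unfolding ceq by (simp add: algebra_simps)
    also have "\<dots> = of_int (A*q2) + of_int (B*q1) * \<i> * of_real (sqrt (real D))"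
      unfolding A B by simp
    finally show ?thesis .
  qed
  hence "of_int (q1*q2) * c \<in> RR D" by (metis RR_I)
  thus ?thesis using q1 q2 by (intro exI[of _ "q1*q2"]) simp
qed

lemma Delta_I: "x \<in> RR D \<Longrightarrow> of_nat M1 * x * c^(2^m) \<in> Delta_c D M1 c"
  unfolding Delta_c_def using RR_sub_O by blast

lemma cluster:
  fixes c :: complex
  assumes c: "c \<in> quad_field D" and nc: "c \<notin> ring_of_integers D" and D: "D > 0" and M: "M1 > 0"
  shows "\<exists>S z s. finite S \<and> card S = k \<and> S \<subseteq> Delta_c D M1 c \<and> (\<forall>y\<in>S. cmod (y - z) \<le> 1/4)
     \<and> s > 0 \<and> (\<forall>y\<in>S. \<forall>\<rho>\<in>RR D. y + of_int s * \<rho> \<in> Delta_c D M1 c)"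
proof (induction k)
  case 0
  show ?case by (intro exI[of _ "{}"] exI[of _ 0] exI[of _ 1]) simp
next
  case (Suc k)
  then obtain S z s where S: "finite S" "card S = k" "S \<subseteq> Delta_c D M1 c"
    "\<forall>y\<in>S. cmod (y - z) \<le> 1/4" "s > 0" "\<forall>y\<in>S. \<forall>\<rho>\<in>RR D. y + of_int s * \<rho> \<in> Delta_c D M1 c"
    by blast
  obtain q where q: "q > 0" "of_int q * c \<in> RR D" using qc_in_RR[OF c] by blast
  define \<alpha> where "\<alpha> = of_int q * c"
  have \<alpha>R: "\<alpha> \<in> RR D" using q unfolding \<alpha>_def by simp
  have c0: "c \<noteq> 0"
  proof
    assume "c = 0"
    hence "c \<in> RR D" using RR_of_int[of 0 D] by simp
    thus False using nc RR_sub_O by blast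
  qed
  have \<alpha>0: "\<alpha> \<noteq> 0" unfolding \<alpha>_def using q c0 by simp
  obtain N\<alpha> where N\<alpha>: "\<alpha> * cnj \<alpha> = of_int N\<alpha>"
    using RR_norm_int[OF \<alpha>R] by (auto elim: Ints_cases)
  have "complex_of_real (cmod \<alpha> ^ 2) = of_int N\<alpha>" using N\<alpha> complex_norm_square[of \<alpha>] by simp
  hence "real_of_int N\<alpha> = cmod \<alpha> ^ 2" by (metis of_real_eq_iff of_real_of_int_eq)
  hence N\<alpha>pos: "N\<alpha> > 0" using \<alpha>0 by (metis of_int_0_less_iff zero_less_norm_iff zero_less_power)
  define sq where "sq = sqrt (real D)"
  have sq: "sq > 0" using D by (simp add: sq_def)
  define \<delta> where "\<delta> = (1/4) / (real k + 1 + sq)"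
  have \<delta>: "\<delta> > 0" unfolding \<delta>_def using sq by simp
  obtain m x0 y0 where g: "x0 \<in> RR D" "y0 \<in> RR D"
    "of_nat M1 * c^(2^m) * x0 + of_int s * y0 \<noteq> 0"
    "cmod (of_nat M1 * c^(2^m) * x0 + of_int s * y0) < \<delta>"
    using small_elem[OF c nc D M S(5) \<delta>] by blast
  define g where "g = of_nat M1 * c^(2^m) * x0 + of_int s * y0"
  obtain x1 y1 where j0: "x1 \<in> RR D" "y1 \<in> RR D"
    "cmod (of_nat M1 * c^(2^m) * x1 + of_int s * y1 - z) \<le> cmod g * (1 + sqrt (real D)) / 2"
    using density[OF g_def g(1,2) _ D, of z] g(3) unfolding g_def by blast
  define j0 where "j0 = of_nat M1 * c^(2^m) * x1 + of_int s * y1"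
  define jj where "jj = (\<lambda>i::nat. of_nat M1 * c^(2^m) * (x1 + of_nat i * x0) + of_int s * (y1 + of_nat i * y0))"
  have jj_eq: "jj i = j0 + of_nat i * g" for i
    unfolding jj_def j0_def g_def by (simp add: algebra_simps)
  have gnz: "g \<noteq> 0" using g(3) unfolding g_def .
  have inj: "inj_on jj {0..k}"
    unfolding inj_on_def jj_eq using gnz by simp
  have "\<not> jj ` {0..k} \<subseteq> S"
  proof
    assume "jj ` {0..k} \<subseteq> S"
    hence "card (jj ` {0..k}) \<le> card S" using S(1) card_mono by blast
    thus False using card_image[OF inj] S(2) by simp
  qed
  then obtain i where i: "i \<le> k" "jj i \<notin> S" by (meson atLeastAtMost_iff image_subsetI zero_le)
  define x where "x = x1 + of_nat i * x0"
  define y where "y = y1 + of_nat i * y0"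
  have xR: "x \<in> RR D" unfolding x_def
    using RR_add[OF j0(1) RR_mult[OF RR_of_int[of "int i"] g(1)]] by simp
  have yR: "y \<in> RR D" unfolding y_def
    using RR_add[OF j0(2) RR_mult[OF RR_of_int[of "int i"] g(2)]] by simp
  define j where "j = jj i"
  have j_eq: "j = of_nat M1 * c^(2^m) * x + of_int s * y" unfolding j_def jj_def x_def y_def ..
  have jdist: "cmod (j - z) \<le> 1/4"
  proof -
    have "cmod (j - z) = cmod ((j0 - z) + of_nat i * g)" unfolding j_def jj_eq by (simp add: algebra_simps)
    also have "\<dots> \<le> cmod (j0 - z) + real i * cmod g" by (rule order_trans[OF norm_triangle_ineq]) (simp add: norm_mult)
    also have "\<dots> \<le> cmod g * (1 + sq) / 2 + real k * cmod g"
      using j0(3) i(1) unfolding j0_def sq_def by (intro add_mono mult_right_mono) auto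
    also have "\<dots> \<le> cmod g * (real k + 1 + sq)" using sq by (simp add: field_simps)
    also have "\<dots> \<le> \<delta> * (real k + 1 + sq)" using g(4) sq unfolding g_def
      by (intro mult_right_mono) auto
    also have "\<dots> = 1/4" unfolding \<delta>_def using sq by simp
    finally show ?thesis .
  qed
  define w where "w = - (of_int s * y)"
  define S' where "S' = (\<lambda>p. p + w) ` insert j S"
  define s' where "s' = s * int M1 * N\<alpha> ^ (2^m)"
  show ?case
  proof (intro exI[of _ S'] exI[of _ "z + w"] exI[of _ s'] conjI ballI)
    show "finite S'" unfolding S'_def using S(1) by simp
    show "card S' = Suc k" unfolding S'_def
      using card_image[of "\<lambda>p. p + w" "insert j S"] S(1,2) i(2) unfolding j_def
      by (simp add: inj_on_def)
    show "s' > 0" unfolding s'_def using S(5) M N\<alpha>pos by simp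
    show "S' \<subseteq> Delta_c D M1 c"
    proof
      fix p' assume "p' \<in> S'"
      then obtain p where p: "p \<in> insert j S" "p' = p + w" unfolding S'_def by blast
      show "p' \<in> Delta_c D M1 c"
      proof (cases "p = j")
        case True
        have "p' = of_nat M1 * x * c^(2^m)" unfolding p(2) True j_eq w_def by (simp add: algebra_simps)
        thus ?thesis using Delta_I[OF xR] by simp
      next
        case False
        hence "p \<in> S" using p by simp
        hence "p + of_int s * (- y) \<in> Delta_c D M1 c" using S(6) RR_minus[OF yR] by blast
        thus ?thesis unfolding p(2) w_def by simp
      qed
    qed
    fix p' assume "p' \<in> S'"
    then obtain p where p: "p \<in> insert j S" "p' = p + w" unfolding S'_def by blast
    show "cmod (p' - (z + w)) \<le> 1/4"
      using p S(4) jdist by auto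
    fix \<rho> assume \<rho>: "\<rho> \<in> RR D"
    show "p' + of_int s' * \<rho> \<in> Delta_c D M1 c"
    proof (cases "p = j")
      case True
      define x' where "x' = x + of_int s * of_int q ^ (2^m) * cnj \<alpha> ^ (2^m) * \<rho>"
      have x'R: "x' \<in> RR D" unfolding x'_def
        by (intro RR_add xR RR_mult RR_of_int RR_power RR_cnj \<alpha>R \<rho>)
      have key: "c^(2^m) * (of_int q ^ (2^m) * cnj \<alpha> ^ (2^m)) = of_int N\<alpha> ^ (2^m)"
      proof -
        have "c^(2^m) * (of_int q ^ (2^m) * cnj \<alpha> ^ (2^m)) = (\<alpha> * cnj \<alpha>) ^ (2^m)"
          unfolding \<alpha>_def by (simp add: power_mult_distrib mult_ac)
        thus ?thesis using N\<alpha> by simp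
      qed
      have "p' + of_int s' * \<rho> = of_nat M1 * c^(2^m) * x + of_int s * of_nat M1 * (c^(2^m) * (of_int q ^ (2^m) * cnj \<alpha> ^ (2^m))) * \<rho>"
        unfolding p(2) True j_eq w_def s'_def key by (simp add: algebra_simps)
      also have "\<dots> = of_nat M1 * x' * c^(2^m)" unfolding x'_def by (simp add: algebra_simps)
      finally show ?thesis using Delta_I[OF x'R] by simp
    next
      case False
      hence pS: "p \<in> S" using p by simp
      have "p' + of_int s' * \<rho> = p + of_int s * (- y + of_int (int M1 * N\<alpha> ^ (2^m)) * \<rho>)"
        unfolding p(2) w_def s'_def by (simp add: algebra_simps)
      moreover have "- y + of_int (int M1 * N\<alpha> ^ (2^m)) * \<rho> \<in> RR D"
        by (intro RR_add RR_minus yR RR_mult RR_of_int \<rho>)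
      ultimately show ?thesis using S(6) pS by simp
    qed
  qed
qed

lemma floor_two:
  fixes r z :: real
  assumes "\<bar>r - z\<bar> \<le> 1/4"
  shows "\<lfloor>r\<rfloor> \<in> {\<lfloor>z - 1/4\<rfloor>, \<lfloor>z - 1/4\<rfloor> + 1}"
proof -
  have "\<lfloor>z - 1/4\<rfloor> \<le> \<lfloor>r\<rfloor>" using assms by (intro floor_mono) linarith
  moreover have "\<lfloor>r\<rfloor> \<le> \<lfloor>z - 1/4 + 1\<rfloor>" using assms by (intro floor_mono) linarith
  moreover have "\<lfloor>z - 1/4 + 1\<rfloor> = \<lfloor>z - 1/4\<rfloor> + 1" by (metis floor_add_int of_int_1)
  ultimately show ?thesis by auto
qed

theorem lemma4p4:
  fixes D M1 :: nat and c :: complex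
  assumes "D > 0" and "squarefree D" and "M1 > 0"
    and "c \<in> quad_field D" and "c \<notin> ring_of_integers D"
  shows "\<not> BC_property (Delta_c D M1 c)"
proof
  assume "BC_property (Delta_c D M1 c)"
  then obtain K :: nat where K: "\<And>m n. finite (Delta_c D M1 c \<inter> unit_square m n)"
    "\<And>m n. card (Delta_c D M1 c \<inter> unit_square m n) < K"
    unfolding BC_property_def by blast
  obtain S z where S: "finite S" "card S = 4*K" "S \<subseteq> Delta_c D M1 c"
    "\<forall>y\<in>S. cmod (y - z) \<le> 1/4"
    using cluster[OF assms(4,5,1,3), of "4*K"] by blast
  define A where "A = \<lfloor>Re z - 1/4\<rfloor>"
  define B where "B = \<lfloor>Im z - 1/4\<rfloor>"
  define T where "T = {A, A+1} \<times> {B, B+1}"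
  define U where "U = (\<lambda>mn. Delta_c D M1 c \<inter> unit_square (fst mn) (snd mn))"
  have Tfin: "finite T" unfolding T_def by simp
  have Tne: "T \<noteq> {}" unfolding T_def by simp
  have Tcard: "card T \<le> 4" unfolding T_def
    by (simp add: card_cartesian_product card_insert_if)
  have sub: "S \<subseteq> (\<Union>mn\<in>T. U mn)"
  proof
    fix y assume y: "y \<in> S"
    have "\<bar>Re y - Re z\<bar> \<le> 1/4" using S(4) y abs_Re_le_cmod[of "y - z"] by fastforce
    hence a: "\<lfloor>Re y\<rfloor> \<in> {A, A+1}" unfolding A_def by (rule floor_two)
    have "\<bar>Im y - Im z\<bar> \<le> 1/4" using S(4) y abs_Im_le_cmod[of "y - z"] by fastforce
    hence b: "\<lfloor>Im y\<rfloor> \<in> {B, B+1}" unfolding B_def by (rule floor_two)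
    have "y \<in> unit_square \<lfloor>Re y\<rfloor> \<lfloor>Im y\<rfloor>" unfolding unit_square_def
      by (simp add: of_int_floor_le less_imp_le[OF real_of_int_floor_add_one_gt])
    hence "y \<in> U (\<lfloor>Re y\<rfloor>, \<lfloor>Im y\<rfloor>)" unfolding U_def using y S(3) by auto
    moreover have "(\<lfloor>Re y\<rfloor>, \<lfloor>Im y\<rfloor>) \<in> T" unfolding T_def using a b by blast
    ultimately show "y \<in> (\<Union>mn\<in>T. U mn)" by blast
  qed
  have "finite (\<Union>mn\<in>T. U mn)" using Tfin K(1) unfolding U_def by blast
  hence "card S \<le> card (\<Union>mn\<in>T. U mn)"
    using sub by (intro card_mono)
  also have "\<dots> \<le> (\<Sum>mn\<in>T. card (U mn))" using Tfin by (rule card_UN_le)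
  also have "\<dots> < (\<Sum>mn\<in>T. K)" using Tfin Tne K(2) unfolding U_def
    by (intro sum_strict_mono) auto
  also have "\<dots> = card T * K" by simp
  also have "\<dots> \<le> 4 * K" using Tcard by simp
  finally show False using S(2) by simp
qed

end
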